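(* Let $A = \mathrm{diag}(a_1,\dots,a_n)$ with $a_i > 0$ and $\Sigma$ a diagonal positive semidefinite matrix. Consider the noisy quadratic model with stochastic loss $\hat L(x) = \frac{1}{2}(x - c)^T A (x - c)$, $c \sim \mathcal{N}(0,\Sigma)$, and SGD with learning rate $\gamma > 0$: $x \mapsto x - \gamma A(x - c)$, with a fresh independent sample $c$ (independent of everything else) at each step. Lookahead with inner optimizer SGD, $k \geq 1$ inner steps and step size $\alpha \in (0,1]$ is defined by: given slow weights $\phi_t$ (a random vector), set $\theta_{t,0} = \phi_t$, $\theta_{t,i} = \theta_{t,i-1} - \gamma A(\theta_{t,i-1} - c_{t,i})$ for $i = 1,\dots,k$, and $\phi_{t+1} = (1-\alpha)\phi_t + \alpha\,\theta_{t,k}$. Then, writing $\mathbb{V}[\cdot]$ for the diagonal matrix of coordinatewise variances, $$\mathbb{E}[\phi_{t+1}] = \big[(1-\alpha)I + \alpha(I - \gamma A)^k\big]\mathbb{E}[\phi_t],$$ $$\mathbb{V}[\phi_{t+1}] = \big[(1-\alpha)I + \alpha(I-\gamma A)^k\big]^2 \mathbb{V}[\phi_t] + \alpha^2 \sum_{i=0}^{k-1}(I - \gamma A)^{2i}\gamma^2 A^2 \Sigma.$$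
   Context: All matrices involved are diagonal, so products and the formulas above act coordinatewise. *)

theory Defs
  imports "HOL-Probability.Probability"
begin

definition gauss1 :: "real \<Rightarrow> real measure" where
  "gauss1 s = (if s = 0 then return borel 0 else density lborel (normal_density 0 (sqrt s)))"

definition gauss_diag :: "('n::finite \<Rightarrow> real) \<Rightarrow> ('n \<Rightarrow> real) measure" where
  "gauss_diag \<sigma> = PiM UNIV (\<lambda>j. gauss1 (\<sigma> j))"

primrec la_inner :: "real \<Rightarrow> ('n \<Rightarrow> real) \<Rightarrow> (nat \<Rightarrow> 'a \<Rightarrow> 'n \<Rightarrow> real)
    \<Rightarrow> ('a \<Rightarrow> 'n \<Rightarrow> real) \<Rightarrow> nat \<Rightarrow> 'a \<Rightarrow> 'n \<Rightarrow> real" where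
  "la_inner \<gamma> a c \<phi> 0 = \<phi>"
| "la_inner \<gamma> a c \<phi> (Suc i) = (\<lambda>\<omega> j. la_inner \<gamma> a c \<phi> i \<omega> j
      - \<gamma> * a j * (la_inner \<gamma> a c \<phi> i \<omega> j - c (Suc i) \<omega> j))"

definition la_step :: "real \<Rightarrow> real \<Rightarrow> ('n \<Rightarrow> real) \<Rightarrow> (nat \<Rightarrow> 'a \<Rightarrow> 'n \<Rightarrow> real)
    \<Rightarrow> ('a \<Rightarrow> 'n \<Rightarrow> real) \<Rightarrow> nat \<Rightarrow> 'a \<Rightarrow> 'n \<Rightarrow> real" where
  "la_step \<alpha> \<gamma> a c \<phi> k = (\<lambda>\<omega> j. (1 - \<alpha>) * \<phi> \<omega> j + \<alpha> * la_inner \<gamma> a c \<phi> k \<omega> j)"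

end

theory Submission imports Defs begin

lemma gauss1_prob: "s \<ge> 0 \<Longrightarrow> prob_space (gauss1 s)"
  unfolding gauss1_def by (auto intro!: prob_space_return prob_space_normal_density)

lemma gauss1_sets: "sets (gauss1 s) = sets borel"
  unfolding gauss1_def by auto

lemma return0_int:
  "integrable (return borel (0::real)) (\<lambda>x. x)" "integrable (return borel (0::real)) (\<lambda>x. x^2)"
proof -
  have fm: "finite_measure (return borel (0::real))" by (rule prob_space.finite_measure, rule prob_space_return) simp
  show "integrable (return borel (0::real)) (\<lambda>x. x)"
      apply (rule finite_measure.integrable_const_bound[OF fm, where B=0])
      apply (subst AE_return) apply simp_all
      done
  show "integrable (return borel (0::real)) (\<lambda>x. x^2)"
      apply (rule finite_measure.integrable_const_bound[OF fm, where B=0])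
      apply (subst AE_return) apply simp_all
      done
qed

lemma gauss1_moments:
  assumes "s \<ge> 0"
  shows "integrable (gauss1 s) (\<lambda>x. x) \<and> integral\<^sup>L (gauss1 s) (\<lambda>x. x) = 0 \<and>
    integrable (gauss1 s) (\<lambda>x. x^2) \<and> integral\<^sup>L (gauss1 s) (\<lambda>x. x^2) = s"
proof (cases "s = 0")
  case True
  then have g: "gauss1 s = return borel 0" by (simp add: gauss1_def)
  have a: "integral\<^sup>L (return borel (0::real)) (\<lambda>x. x) = 0"
    by (subst integral_return) auto
  have b: "integral\<^sup>L (return borel (0::real)) (\<lambda>x. x^2) = 0"
    by (subst integral_return) auto
  show ?thesis unfolding g using return0_int a b True by simp
next
  case False
  then have sp: "0 < sqrt s" using assms by simp
  have d: "gauss1 s = density lborel (normal_density 0 (sqrt s))" using False by (simp add: gauss1_def)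
  show ?thesis
    unfolding d using integrable_normal_moment_nz_1[OF sp, of 0] integral_normal_moment_nz_1[OF sp, of 0]
      integrable_normal_moment[OF sp, of 0 2] integral_normal_moment_even[OF sp, of 0 1] assms
    by (auto simp: integrable_density integral_density)
qed

lemma (in prob_space) comp_distr:
  assumes "distr M (PiM UNIV (\<lambda>_. borel)) X = gauss_diag \<sigma>" "X \<in> measurable M (PiM UNIV (\<lambda>_. borel))"
    "\<And>j. \<sigma> j \<ge> 0"
  shows "distr M borel (\<lambda>\<omega>. X \<omega> (j::'n::finite)) = gauss1 (\<sigma> j)"
proof -
  have "distr M borel (\<lambda>\<omega>. X \<omega> j) = distr (distr M (PiM UNIV (\<lambda>_. borel)) X) borel (\<lambda>x. x j)"
    using assms(2) by (subst distr_distr) (auto simp: comp_def)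
  also have "\<dots> = distr (PiM UNIV (\<lambda>j. gauss1 (\<sigma> j))) (gauss1 (\<sigma> j)) (\<lambda>x. x j)"
    unfolding assms(1) gauss_diag_def by (rule distr_cong) (auto simp: gauss1_sets)
  also have "\<dots> = gauss1 (\<sigma> j)"
    by (rule distr_PiM_component) (auto intro: gauss1_prob assms(3))
  finally show ?thesis .
qed

lemma (in prob_space) indep_sq_sum:
  fixes Y :: "nat \<Rightarrow> 'a \<Rightarrow> real"
  assumes fin: "finite I" and ind: "indep_vars (\<lambda>_. borel) Y I"
    and sq: "\<And>i. i \<in> I \<Longrightarrow> integrable M (\<lambda>\<omega>. (Y i \<omega>)^2)"
    and mz: "\<And>i. i \<in> I \<Longrightarrow> expectation (Y i) = 0"
  shows "expectation (\<lambda>\<omega>. (\<Sum>i\<in>I. w i * Y i \<omega>)^2) = (\<Sum>i\<in>I. (w i)^2 * expectation (\<lambda>\<omega>. (Y i \<omega>)^2))"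
proof -
  have rv: "random_variable borel (Y i)" if "i \<in> I" for i
    using ind that unfolding indep_vars_def by blast
  have int1: "integrable M (Y i)" if "i \<in> I" for i
    using square_integrable_imp_integrable[OF rv[OF that] sq[OF that]] .
  have prod: "integrable M (\<lambda>\<omega>. Y i \<omega> * Y l \<omega>) \<and>
      expectation (\<lambda>\<omega>. Y i \<omega> * Y l \<omega>) = (if i = l then expectation (\<lambda>\<omega>. (Y i \<omega>)^2) else 0)"
    if il: "i \<in> I" "l \<in> I" for i l
  proof (cases "i = l")
    case True
    then show ?thesis using sq[OF il(1)] by (simp add: power2_eq_square)
  next
    case False
    have ind2: "indep_vars (\<lambda>_. borel) Y {i, l}"
      by (rule indep_vars_subset[OF ind]) (use il in auto)
    have e: "(\<lambda>\<omega>. \<Prod>m\<in>{i, l}. Y m \<omega>) = (\<lambda>\<omega>. Y i \<omega> * Y l \<omega>)"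
      using False by simp
    have "integrable M (\<lambda>\<omega>. \<Prod>m\<in>{i, l}. Y m \<omega>)"
      by (rule indep_vars_integrable[OF _ ind2]) (use il int1 in auto)
    moreover have "expectation (\<lambda>\<omega>. \<Prod>m\<in>{i, l}. Y m \<omega>) = (\<Prod>m\<in>{i, l}. expectation (Y m))"
      by (rule indep_vars_lebesgue_integral[OF _ ind2]) (use il int1 in auto)
    ultimately show ?thesis using False e mz[OF il(1)] by simp
  qed
  have eq: "(\<lambda>\<omega>. (\<Sum>i\<in>I. w i * Y i \<omega>)^2) = (\<lambda>\<omega>. \<Sum>i\<in>I. \<Sum>l\<in>I. (w i * w l) * (Y i \<omega> * Y l \<omega>))"
    by (simp add: power2_eq_square sum_product mult_ac)
  have "expectation (\<lambda>\<omega>. (\<Sum>i\<in>I. w i * Y i \<omega>)^2)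
      = (\<Sum>i\<in>I. \<Sum>l\<in>I. (w i * w l) * expectation (\<lambda>\<omega>. Y i \<omega> * Y l \<omega>))"
  proof -
    have ip: "integrable M (\<lambda>\<omega>. (w i * w l) * (Y i \<omega> * Y l \<omega>))" if "i \<in> I" "l \<in> I" for i l
      using prod[OF that] by simp
    have ip2: "integrable M (\<lambda>\<omega>. \<Sum>l\<in>I. (w i * w l) * (Y i \<omega> * Y l \<omega>))" if "i \<in> I" for i
      by (rule Bochner_Integration.integrable_sum) (rule ip[OF that])
    show ?thesis unfolding eq
      apply (subst Bochner_Integration.integral_sum)
       apply (erule ip2)
      apply (rule sum.cong[OF refl])
      apply (subst Bochner_Integration.integral_sum)
       apply (erule ip, assumption)
      apply (rule sum.cong[OF refl])
      apply (rule Bochner_Integration.integral_mult_right_zero)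
      done
  qed
  also have "\<dots> = (\<Sum>i\<in>I. \<Sum>l\<in>I. (if i = l then (w i)^2 * expectation (\<lambda>\<omega>. (Y i \<omega>)^2) else 0))"
  proof (intro sum.cong refl)
    fix i l assume il: "i \<in> I" "l \<in> I"
    show "(w i * w l) * expectation (\<lambda>\<omega>. Y i \<omega> * Y l \<omega>) = (if i = l then (w i)^2 * expectation (\<lambda>\<omega>. (Y i \<omega>)^2) else 0)"
      using prod[OF il] by (cases "i = l") (simp_all add: power2_eq_square)
  qed
  also have "\<dots> = (\<Sum>i\<in>I. (w i)^2 * expectation (\<lambda>\<omega>. (Y i \<omega>)^2))"
    using fin by simp
  finally show ?thesis .
qed


lemma sum_rev_1k: "(\<Sum>m\<in>{1..k::nat}. g (k - m)) = (\<Sum>i<k. (g i :: real))"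
  by (rule sum.reindex_bij_witness[of _ "\<lambda>i. k - i" "\<lambda>m. k - m"]) (auto simp: le_diff_conv2)

lemma inner_closed:
  "la_inner \<gamma> a c \<phi> i \<omega> j = (1 - \<gamma> * a j)^i * \<phi> \<omega> j
     + (\<Sum>m\<in>{1..i}. (1 - \<gamma> * a j)^(i - m) * (\<gamma> * a j) * c m \<omega> j)"
proof (induction i)
  case 0
  then show ?case by simp
next
  case (Suc i)
  let ?b = "1 - \<gamma> * a j"
  have "la_inner \<gamma> a c \<phi> (Suc i) \<omega> j = ?b * la_inner \<gamma> a c \<phi> i \<omega> j + \<gamma> * a j * c (Suc i) \<omega> j"
    by (simp add: algebra_simps)
  also have "\<dots> = ?b^(Suc i) * \<phi> \<omega> j
     + ((\<Sum>m\<in>{1..i}. ?b * (?b^(i - m) * (\<gamma> * a j) * c m \<omega> j)) + \<gamma> * a j * c (Suc i) \<omega> j)"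
    unfolding Suc by (simp add: algebra_simps sum_distrib_left)
  also have "(\<Sum>m\<in>{1..i}. ?b * (?b^(i - m) * (\<gamma> * a j) * c m \<omega> j))
      = (\<Sum>m\<in>{1..i}. ?b^(Suc i - m) * (\<gamma> * a j) * c m \<omega> j)"
    by (intro sum.cong refl) (simp add: Suc_diff_le)
  also have "\<dots> + \<gamma> * a j * c (Suc i) \<omega> j = (\<Sum>m\<in>{1..Suc i}. ?b^(Suc i - m) * (\<gamma> * a j) * c m \<omega> j)"
    by (simp add: sum.cl_ivl_Suc)
  finally show ?case .
qed

theorem lemma1:
  fixes M :: "'a measure"
    and a \<sigma> :: "'n::finite \<Rightarrow> real"
    and \<gamma> \<alpha> :: real and k :: nat
    and \<phi> :: "'a \<Rightarrow> 'n \<Rightarrow> real"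
    and c :: "nat \<Rightarrow> 'a \<Rightarrow> 'n \<Rightarrow> real"
  assumes "prob_space M"
    and "\<And>j. a j > 0"
    and "\<And>j. \<sigma> j \<ge> 0"
    and "\<gamma> > 0" and "k \<ge> 1" and "0 < \<alpha>" and "\<alpha> \<le> 1"
    and "\<And>i. i \<in> {1..k} \<Longrightarrow> distr M (PiM UNIV (\<lambda>_. borel)) (c i) = gauss_diag \<sigma>"
    and "prob_space.indep_vars M (\<lambda>_. PiM UNIV (\<lambda>_::'n. borel))
           (\<lambda>i. if i = 0 then \<phi> else c i) {0..k}"
    and "\<And>j. integrable M (\<lambda>\<omega>. (\<phi> \<omega> j)^2)"
  shows "\<forall>j. prob_space.expectation M (\<lambda>\<omega>. la_step \<alpha> \<gamma> a c \<phi> k \<omega> j)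
              = ((1 - \<alpha>) + \<alpha> * (1 - \<gamma> * a j) ^ k) * prob_space.expectation M (\<lambda>\<omega>. \<phi> \<omega> j)
         \<and> prob_space.variance M (\<lambda>\<omega>. la_step \<alpha> \<gamma> a c \<phi> k \<omega> j)
              = ((1 - \<alpha>) + \<alpha> * (1 - \<gamma> * a j) ^ k)^2 * prob_space.variance M (\<lambda>\<omega>. \<phi> \<omega> j)
                + \<alpha>^2 * (\<Sum>i<k. (1 - \<gamma> * a j) ^ (2 * i) * \<gamma>^2 * (a j)^2 * \<sigma> j)"
proof (intro allI)
  fix j
  interpret P: prob_space M by (rule assms(1))
  define b where "b = 1 - \<gamma> * a j"
  define \<beta> where "\<beta> = (1 - \<alpha>) + \<alpha> * b ^ k"
  define \<mu> where "\<mu> = P.expectation (\<lambda>\<omega>. \<phi> \<omega> j)"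
  let ?X = "\<lambda>i. if i = 0 then \<phi> else c i"
  have ind: "P.indep_vars (\<lambda>_. PiM UNIV (\<lambda>_::'n. borel)) ?X {0..k}" by (rule assms(9))
  have rvX: "?X i \<in> measurable M (PiM UNIV (\<lambda>_::'n. borel))" if "i \<in> {0..k}" for i
    using ind that unfolding P.indep_vars_def by blast
  have rvphi: "\<phi> \<in> measurable M (PiM UNIV (\<lambda>_::'n. borel))" using rvX[of 0] by simp
  have rvc: "c m \<in> measurable M (PiM UNIV (\<lambda>_::'n. borel))" if "m \<in> {1..k}" for m
    using rvX[of m] that by simp
  have mphi: "(\<lambda>\<omega>. \<phi> \<omega> j) \<in> borel_measurable M"
    by (rule measurable_compose[OF rvphi measurable_component_singleton]) simp
  have mc: "(\<lambda>\<omega>. c m \<omega> j) \<in> borel_measurable M" if "m \<in> {1..k}" for m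
    by (rule measurable_compose[OF rvc[OF that] measurable_component_singleton]) simp
  have dc: "distr M borel (\<lambda>\<omega>. c m \<omega> j) = gauss1 (\<sigma> j)" if "m \<in> {1..k}" for m
    by (rule P.comp_distr[OF assms(8)[OF that] rvc[OF that] assms(3)])
  have gm: "integrable (gauss1 (\<sigma> j)) (\<lambda>x. x) \<and> integral\<^sup>L (gauss1 (\<sigma> j)) (\<lambda>x. x) = 0 \<and>
    integrable (gauss1 (\<sigma> j)) (\<lambda>x. x^2) \<and> integral\<^sup>L (gauss1 (\<sigma> j)) (\<lambda>x. x^2) = \<sigma> j"
    by (rule gauss1_moments[OF assms(3)])
  have bm1: "(\<lambda>x::real. x) \<in> borel_measurable borel" by simp
  have bm2: "(\<lambda>x::real. x^2) \<in> borel_measurable borel" by simp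
  have c1: "integrable M (\<lambda>\<omega>. c m \<omega> j) \<and> P.expectation (\<lambda>\<omega>. c m \<omega> j) = 0" if "m \<in> {1..k}" for m
  proof -
    have i: "integrable (distr M borel (\<lambda>\<omega>. c m \<omega> j)) (\<lambda>x. x)" unfolding dc[OF that] using gm by blast
    have e: "integral\<^sup>L (distr M borel (\<lambda>\<omega>. c m \<omega> j)) (\<lambda>x. x) = 0" unfolding dc[OF that] using gm by blast
    show ?thesis
      using i e unfolding integrable_distr_eq[OF mc[OF that] bm1] integral_distr[OF mc[OF that] bm1]
      by blast
  qed
  have c2: "integrable M (\<lambda>\<omega>. (c m \<omega> j)^2) \<and> P.expectation (\<lambda>\<omega>. (c m \<omega> j)^2) = \<sigma> j" if "m \<in> {1..k}" for m
  proof -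
    have i: "integrable (distr M borel (\<lambda>\<omega>. c m \<omega> j)) (\<lambda>x. x^2)" unfolding dc[OF that] using gm by blast
    have e: "integral\<^sup>L (distr M borel (\<lambda>\<omega>. c m \<omega> j)) (\<lambda>x. x^2) = \<sigma> j" unfolding dc[OF that] using gm by blast
    show ?thesis
      using i e unfolding integrable_distr_eq[OF mc[OF that] bm2] integral_distr[OF mc[OF that] bm2]
      by blast
  qed
  have iphi: "integrable M (\<lambda>\<omega>. \<phi> \<omega> j)"
    by (rule P.square_integrable_imp_integrable[OF mphi assms(10)])
  have step: "la_step \<alpha> \<gamma> a c \<phi> k \<omega> j = \<beta> * \<phi> \<omega> j + (\<Sum>m\<in>{1..k}. (\<alpha> * b^(k - m) * \<gamma> * a j) * c m \<omega> j)" for \<omega>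
    unfolding la_step_def inner_closed \<beta>_def b_def
    by (simp add: algebra_simps sum_distrib_left)
  have E: "P.expectation (\<lambda>\<omega>. la_step \<alpha> \<gamma> a c \<phi> k \<omega> j) = \<beta> * \<mu>"
  proof -
    have "P.expectation (\<lambda>\<omega>. la_step \<alpha> \<gamma> a c \<phi> k \<omega> j)
       = \<beta> * \<mu> + (\<Sum>m\<in>{1..k}. (\<alpha> * b^(k - m) * \<gamma> * a j) * P.expectation (\<lambda>\<omega>. c m \<omega> j))"
      unfolding step \<mu>_def
      apply (subst Bochner_Integration.integral_add)
        apply (rule integrable_mult_right[OF iphi])
       apply (rule Bochner_Integration.integrable_sum, rule integrable_mult_right, simp add: c1)
      apply (subst Bochner_Integration.integral_sum)
       apply (rule integrable_mult_right, simp add: c1)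
      apply simp
      done
    also have "\<dots> = \<beta> * \<mu>" using c1 by simp
    finally show ?thesis .
  qed
  define Y where "Y = (\<lambda>m \<omega>. ?X m \<omega> j - (if m = 0 then \<mu> else 0))"
  have indY: "P.indep_vars (\<lambda>_. borel) Y {0..k}"
    unfolding Y_def
    by (rule P.indep_vars_compose2[OF ind]) simp
  have Y0: "Y 0 = (\<lambda>\<omega>. \<phi> \<omega> j - \<mu>)" unfolding Y_def by simp
  have Ym: "Y m = (\<lambda>\<omega>. c m \<omega> j)" if "m \<in> {1..k}" for m unfolding Y_def using that by auto
  have sq0: "integrable M (\<lambda>\<omega>. (\<phi> \<omega> j - \<mu>)^2)"
  proof -
    have "(\<lambda>\<omega>. (\<phi> \<omega> j - \<mu>)^2) = (\<lambda>\<omega>. (\<phi> \<omega> j)^2 - 2 * \<mu> * \<phi> \<omega> j + \<mu>^2)"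
      by (simp add: power2_eq_square algebra_simps)
    then show ?thesis using assms(10)[of j] iphi by simp
  qed
  have sqY: "integrable M (\<lambda>\<omega>. (Y m \<omega>)^2)" if "m \<in> {0..k}" for m
  proof (cases "m = 0")
    case True then show ?thesis using sq0 Y0 by simp
  next
    case False then have "m \<in> {1..k}" using that by auto
    then show ?thesis using c2 Ym by simp
  qed
  have mzY: "P.expectation (Y m) = 0" if "m \<in> {0..k}" for m
  proof (cases "m = 0")
    case True then show ?thesis using Y0 iphi by (simp add: \<mu>_def P.prob_space)
  next
    case False then have "m \<in> {1..k}" using that by auto
    then show ?thesis using c1 Ym by simp
  qed
  define w where "w = (\<lambda>m. if m = 0 then \<beta> else \<alpha> * b^(k - m) * \<gamma> * a j)"
  have cen: "la_step \<alpha> \<gamma> a c \<phi> k \<omega> j - \<beta> * \<mu> = (\<Sum>m\<in>{0..k}. w m * Y m \<omega>)" for \<omega>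
  proof -
    have "(\<Sum>m\<in>{0..k}. w m * Y m \<omega>) = w 0 * Y 0 \<omega> + (\<Sum>m\<in>{Suc 0..k}. w m * Y m \<omega>)"
      by (rule sum.atLeast_Suc_atMost) simp
    also have "(\<Sum>m\<in>{Suc 0..k}. w m * Y m \<omega>) = (\<Sum>m\<in>{1..k}. (\<alpha> * b^(k - m) * \<gamma> * a j) * c m \<omega> j)"
      by (intro sum.cong) (auto simp: w_def Ym)
    finally show ?thesis unfolding step using Y0 by (simp add: w_def algebra_simps)
  qed
  have V: "P.variance (\<lambda>\<omega>. la_step \<alpha> \<gamma> a c \<phi> k \<omega> j)
      = (\<Sum>m\<in>{0..k}. (w m)^2 * P.expectation (\<lambda>\<omega>. (Y m \<omega>)^2))"
    unfolding E cen by (rule P.indep_sq_sum[OF _ indY sqY mzY]) auto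
  also have "\<dots> = \<beta>^2 * P.variance (\<lambda>\<omega>. \<phi> \<omega> j) + (\<Sum>m\<in>{1..k}. (\<alpha> * b^(k - m) * \<gamma> * a j)^2 * \<sigma> j)"
  proof -
    have "(\<Sum>m\<in>{0..k}. (w m)^2 * P.expectation (\<lambda>\<omega>. (Y m \<omega>)^2))
        = (w 0)^2 * P.expectation (\<lambda>\<omega>. (Y 0 \<omega>)^2) + (\<Sum>m\<in>{Suc 0..k}. (w m)^2 * P.expectation (\<lambda>\<omega>. (Y m \<omega>)^2))"
      by (rule sum.atLeast_Suc_atMost) simp
    also have "(\<Sum>m\<in>{Suc 0..k}. (w m)^2 * P.expectation (\<lambda>\<omega>. (Y m \<omega>)^2))
       = (\<Sum>m\<in>{1..k}. (\<alpha> * b^(k - m) * \<gamma> * a j)^2 * \<sigma> j)"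
      by (intro sum.cong) (auto simp: w_def Ym c2)
    finally show ?thesis using Y0 by (simp add: w_def \<mu>_def)
  qed
  also have "(\<Sum>m\<in>{1..k}. (\<alpha> * b^(k - m) * \<gamma> * a j)^2 * \<sigma> j)
      = \<alpha>^2 * (\<Sum>i<k. b ^ (2 * i) * \<gamma>^2 * (a j)^2 * \<sigma> j)"
  proof -
    have "(\<Sum>m\<in>{1..k}. (\<alpha> * b^(k - m) * \<gamma> * a j)^2 * \<sigma> j)
        = (\<Sum>m\<in>{1..k}. \<alpha>^2 * (b ^ (2 * (k - m)) * \<gamma>^2 * (a j)^2 * \<sigma> j))"
      by (intro sum.cong refl) (simp add: power_mult_distrib power_mult[symmetric] mult_ac)
    also have "\<dots> = \<alpha>^2 * (\<Sum>m\<in>{1..k}. b ^ (2 * (k - m)) * \<gamma>^2 * (a j)^2 * \<sigma> j)"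
      by (simp add: sum_distrib_left)
    also have "(\<Sum>m\<in>{1..k}. b ^ (2 * (k - m)) * \<gamma>^2 * (a j)^2 * \<sigma> j) = (\<Sum>i<k. b ^ (2 * i) * \<gamma>^2 * (a j)^2 * \<sigma> j)"
      by (rule sum_rev_1k[where g = "\<lambda>i. b ^ (2 * i) * \<gamma>^2 * (a j)^2 * \<sigma> j"])
    finally show ?thesis .
  qed
  finally show "P.expectation (\<lambda>\<omega>. la_step \<alpha> \<gamma> a c \<phi> k \<omega> j)
              = ((1 - \<alpha>) + \<alpha> * (1 - \<gamma> * a j) ^ k) * P.expectation (\<lambda>\<omega>. \<phi> \<omega> j)
         \<and> P.variance (\<lambda>\<omega>. la_step \<alpha> \<gamma> a c \<phi> k \<omega> j)
              = ((1 - \<alpha>) + \<alpha> * (1 - \<gamma> * a j) ^ k)^2 * P.variance (\<lambda>\<omega>. \<phi> \<omega> j)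
                + \<alpha>^2 * (\<Sum>i<k. (1 - \<gamma> * a j) ^ (2 * i) * \<gamma>^2 * (a j)^2 * \<sigma> j)"
    using E by (simp add: \<beta>_def b_def \<mu>_def)
qed

end
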